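(* Let $n\ge 1$ and define $A_n^{(\mathsf{cyc}^*-\mathsf{fix}^*,\mathsf{exc})}(q,t)=\sum_{\sigma\in\mathfrak{S}_n}q^{(\mathsf{cyc}^*-\mathsf{fix}^* )\sigma}t^{\mathsf{exc}\,\sigma}$. Then $$A_{n}^{(\mathsf{cyc}^*-\mathsf{fix}^*, \mathsf{exc})}(q, t)=\left(\frac{1+xt}{1+x}\right)^{n-1}P^{(\mathsf{cyc}^*-\mathsf{fix}^*, \mathsf{cpk}^*,\mathsf{exc})}\left(\mathfrak{S}_n; q, \frac{(1+x)^{2}t}{(x+t)(1+xt)},\frac{x+t}{1+xt}\right),$$ equivalently, $$P^{(\mathsf{cyc}^*-\mathsf{fix}^*, \mathsf{cpk}^*,\mathsf{exc})}(\mathfrak{S}_n; q, x,t)=\left(\frac{1+u}{1+uv}\right)^{n-1}A_{n}^{(\mathsf{cyc}^*-\mathsf{fix}^*,\mathsf{exc})}(q, v),$$ where $u=\frac{1+t^{2}-2xt-(1-t)\sqrt{(1+t)^{2}-4xt}}{2(1-x)t}$ and $v=\frac{(1+t)^{2}-2xt-(1+t)\sqrt{(1+t)^{2}-4xt}}{2xt}$.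
   Context: $\mathfrak{S}_n$ is the set of permutations of $[n]$. $P^{(\mathsf{stat}_1,\ldots,\mathsf{stat}_m)}(\Omega;t_1,\ldots,t_m)=\sum_{\sigma\in\Omega}\prod_j t_j^{\mathsf{stat}_j\sigma}$. For $\sigma\in\mathfrak{S}_n$, $\mathsf{exc}\,\sigma=\#\{i:\sigma(i)>i\}$. The star companion $\sigma^*$ is the permutation of $\{0,\dots,n\}$ with $\sigma^*(0)=n$, $\sigma^*(i)=\sigma(i)-1$ for $i\in[n]$. $\mathsf{cyc}^*\sigma$ is the number of cycles of $\sigma^*$; $\mathsf{fix}^*\sigma=\#\{i\in[n-1]:\sigma^*(i)=i\}$; $\mathsf{cpk}^*\sigma=\#\{i\in[n-1]:(\sigma^* )^{-1}(i)<i>\sigma^*(i)\}$. *)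

theory Defs
  imports Complex_Main "HOL-Combinatorics.Permutations"
begin

definition perms :: "nat \<Rightarrow> (nat \<Rightarrow> nat) set" where
  "perms n = {\<sigma>. \<sigma> permutes {1..n}}"

definition star :: "nat \<Rightarrow> (nat \<Rightarrow> nat) \<Rightarrow> nat \<Rightarrow> nat" where
  "star n \<sigma> i = (if i = 0 then n else if i \<le> n then \<sigma> i - 1 else i)"

definition orbit_set :: "(nat \<Rightarrow> nat) \<Rightarrow> nat \<Rightarrow> nat set" where
  "orbit_set f x = {(f ^^ k) x | k. True}"

definition num_cycles :: "(nat \<Rightarrow> nat) \<Rightarrow> nat set \<Rightarrow> nat" where
  "num_cycles f S = card (orbit_set f ` S)"

definition exc :: "nat \<Rightarrow> (nat \<Rightarrow> nat) \<Rightarrow> nat" where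
  "exc n \<sigma> = card {i \<in> {1..n}. \<sigma> i > i}"

definition cyc_star :: "nat \<Rightarrow> (nat \<Rightarrow> nat) \<Rightarrow> nat" where
  "cyc_star n \<sigma> = num_cycles (star n \<sigma>) {0..n}"

definition fix_star :: "nat \<Rightarrow> (nat \<Rightarrow> nat) \<Rightarrow> nat" where
  "fix_star n \<sigma> = card {i \<in> {1..n-1}. star n \<sigma> i = i}"

definition cpk_star :: "nat \<Rightarrow> (nat \<Rightarrow> nat) \<Rightarrow> nat" where
  "cpk_star n \<sigma> = card {i \<in> {1..n-1}.
      inv (star n \<sigma>) i < i \<and> i > star n \<sigma> i}"

definition A_poly :: "nat \<Rightarrow> real \<Rightarrow> real \<Rightarrow> real" where
  "A_poly n q t = (\<Sum>\<sigma>\<in>perms n. q ^ (cyc_star n \<sigma> - fix_star n \<sigma>) * t ^ exc n \<sigma>)"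

definition P_poly :: "nat \<Rightarrow> real \<Rightarrow> real \<Rightarrow> real \<Rightarrow> real" where
  "P_poly n q x t = (\<Sum>\<sigma>\<in>perms n.
      q ^ (cyc_star n \<sigma> - fix_star n \<sigma>) * x ^ cpk_star n \<sigma> * t ^ exc n \<sigma>)"

end

theory Submission
  imports Defs "HOL-Combinatorics.Cycles"
begin

lemma orbit_set_funpow[simp]: "(f ^^ k) x \<in> orbit_set f x"
  by (auto simp: orbit_set_def)

lemma orbit_set_self[simp]: "x \<in> orbit_set f x"
  using orbit_set_funpow[where k=0 and f=f and x=x] by simp

lemma orbit_set_step: assumes "y \<in> orbit_set f x" shows "f y \<in> orbit_set f x"
proof -
  obtain k where "y = (f ^^ k) x" using assms by (auto simp: orbit_set_def)
  then have "f y = (f ^^ Suc k) x" by simp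
  then show ?thesis by (metis orbit_set_funpow)
qed

lemma orbit_set_sub: assumes "y \<in> orbit_set f x" shows "orbit_set f y \<subseteq> orbit_set f x"
proof -
  obtain a where a: "y = (f ^^ a) x" using assms by (auto simp: orbit_set_def)
  show ?thesis
  proof
    fix z assume "z \<in> orbit_set f y"
    then obtain k where "z = (f ^^ k) y" by (auto simp: orbit_set_def)
    then have "z = (f ^^ (k + a)) x" by (simp add: a funpow_add)
    then show "z \<in> orbit_set f x" by simp
  qed
qed

lemma orbit_set_eq: assumes "permutation f" "y \<in> orbit_set f x"
  shows "orbit_set f y = orbit_set f x"
proof -
  obtain K where K: "(f ^^ K) = id" "K > 0" using permutation_is_nilpotent[OF assms(1)] by blast
  obtain a where a: "y = (f ^^ a) x" using assms by (auto simp: orbit_set_def)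
  have "(f ^^ (K * a - a)) y = (f ^^ (K * a - a + a)) x" by (simp add: a funpow_add)
  also have "K * a - a + a = K * a" proof -
    have "a \<le> K * a" using K(2) by simp
    then show ?thesis by arith
  qed
  also have "f ^^ (K * a) = (f ^^ K) ^^ a" by (simp add: funpow_mult)
  also have "((f ^^ K) ^^ a) x = x" by (simp add: K(1))
  finally have "x \<in> orbit_set f y" by (metis orbit_set_funpow)
  then show ?thesis using orbit_set_sub assms(2) by blast
qed

lemma orbit_set_perm_sub: assumes "r permutes S" "x \<in> S" shows "orbit_set r x \<subseteq> S"
  using assms permutes_in_image[OF permutes_funpow[OF assms(1)]]
  by (auto simp: orbit_set_def)

lemma cyc_fixed_new:
  assumes r: "r permutes {..<n}"
  shows "num_cycles r {..n} = num_cycles r {..<n} + 1"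
proof -
  have rn: "r n = n" by (rule permutes_not_in[OF r]) simp
  have "(r ^^ k) n = n" for k by (induct k) (auto simp: rn)
  then have on: "orbit_set r n = {n}" by (auto simp: orbit_set_def)
  have "{n} \<notin> orbit_set r ` {..<n}"
    using orbit_set_perm_sub[OF r] by fastforce
  moreover have "{..n} = insert n {..<n}" by auto
  ultimately show ?thesis unfolding num_cycles_def using on
    by (simp add: card_insert_disjoint)
qed

lemma transp_comp_eq:
  fixes r :: "nat \<Rightarrow> nat" and n b :: nat
  assumes r: "r permutes {..<n}" and b: "b < n"
  shows "transpose n b \<circ> r = (\<lambda>i. if i = inv r b then n else if i = n then b else r i)"
proof
  fix i
  have rn: "r n = n" by (rule permutes_not_in[OF r]) simp
  have rp: "r (inv r b) = b" using permutes_inverses[OF r] by simp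
  have "r i \<noteq> n" if "i \<noteq> n"
  proof
    assume "r i = n"
    then have "i \<notin> {..<n}" using permutes_in_image[OF r, of i] by auto
    then have "r i = i" using permutes_not_in[OF r] by blast
    with \<open>r i = n\<close> that show False by simp
  qed
  moreover have "r i \<noteq> b" if "i \<noteq> inv r b"
    using that permutes_inverses[OF r] by metis
  ultimately show "(transpose n b \<circ> r) i = (if i = inv r b then n else if i = n then b else r i)"
    using rn rp b by (auto simp: transpose_def)
qed

lemma cyc_ins:
  assumes r: "r permutes {..<n}" and b: "b < n"
  shows "num_cycles (transpose n b \<circ> r) {..n} = num_cycles r {..<n}"
proof -
  define p where "p = inv r b"
  define g where "g = transpose n b \<circ> r"
  have g: "g = (\<lambda>i. if i = p then n else if i = n then b else r i)"
    unfolding g_def p_def using transp_comp_eq[OF r b] .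
  have rp: "r p = b" using permutes_inverses[OF r] p_def by simp
  have pn: "p < n" using permutes_in_image[OF r, of p] rp b by auto
  have gperm: "permutation g" unfolding g_def
    by (rule permutation_compose[OF permutation_swap_id permutes_imp_permutation[OF _ r]]) simp
  have orb: "orbit_set g x = orbit_set r x \<union> (if p \<in> orbit_set r x then {n} else {})"
    if x: "x < n" for x
  proof -
    have sub: "orbit_set r x \<subseteq> {..<n}" using orbit_set_perm_sub[OF r] x by simp
    have sim: "\<exists>k'. (g ^^ k') x = (r ^^ k) x" for k
    proof (induct k)
      case 0 show ?case by (auto intro: exI[of _ 0])
    next
      case (Suc k)
      then obtain k' where k': "(g ^^ k') x = (r ^^ k) x" by blast
      have yin: "(r ^^ k) x < n" by (meson lessThan_iff orbit_set_funpow subsetD sub)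
      show ?case
      proof (cases "(r ^^ k) x = p")
        case True
        then have "(g ^^ Suc (Suc k')) x = (r ^^ Suc k) x"
          using k' pn rp by (simp add: g)
        then show ?thesis by blast
      next
        case False
        then have "(g ^^ Suc k') x = (r ^^ Suc k) x"
          using k' yin by (simp add: g)
        then show ?thesis by blast
      qed
    qed
    have sup: "orbit_set r x \<subseteq> orbit_set g x"
      using sim by (auto simp: orbit_set_def) (metis)
    have nin: "n \<in> orbit_set g x" if pin: "p \<in> orbit_set r x"
    proof -
      obtain k where "p = (r ^^ k) x" using pin unfolding orbit_set_def by blast
      then obtain k' where "(g ^^ k') x = p" using sim by metis
      then have "(g ^^ Suc k') x = n" by (simp add: g)
      then show ?thesis by (metis orbit_set_funpow)
    qed
    have inv: "(g ^^ k) x \<in> orbit_set r x \<or> ((g ^^ k) x = n \<and> p \<in> orbit_set r x)" for k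
    proof (induct k)
      case 0 then show ?case by simp
    next
      case (Suc k)
      define y where "y = (g ^^ k) x"
      have "g y \<in> orbit_set r x \<or> (g y = n \<and> p \<in> orbit_set r x)"
      proof (cases "y \<in> orbit_set r x")
        case True
        then have "y < n" using sub by auto
        then show ?thesis using True orbit_set_step[OF True] by (auto simp: g)
      next
        case False
        then have "y = n" "p \<in> orbit_set r x" using Suc y_def by auto
        then show ?thesis using orbit_set_step[where y=p and f=r and x=x] rp pn by (auto simp: g)
      qed
      then show ?case by (simp add: y_def)
    qed
    have "orbit_set g x \<subseteq> orbit_set r x \<union> (if p \<in> orbit_set r x then {n} else {})"
      using inv by (auto simp: orbit_set_def)
    then show ?thesis using sup nin by auto
  qed
  have "g p = n" by (simp add: g)
  then have "n \<in> orbit_set g p" using orbit_set_step[where y=p and f=g and x=p] by simp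
  then have onp: "orbit_set g n = orbit_set g p" using orbit_set_eq[OF gperm] by blast
  have img1: "orbit_set g ` {..n} = orbit_set g ` {..<n}"
  proof -
    have "{..n} = insert n {..<n}" by auto
    then show ?thesis using onp pn by auto
  qed
  define h where "h = (\<lambda>Z. Z \<union> (if p \<in> Z then {n} else {}))"
  have img2: "orbit_set g ` {..<n} = h ` (orbit_set r ` {..<n})"
    using orb by (auto simp: h_def image_image)
  have hZ: "h Z - {n} = Z" if "Z \<subseteq> {..<n}" for Z using that by (auto simp: h_def)
  have "inj_on h (orbit_set r ` {..<n})"
  proof (rule inj_onI)
    fix A B assume A: "A \<in> orbit_set r ` {..<n}" and B: "B \<in> orbit_set r ` {..<n}" and hAB: "h A = h B"
    have "A \<subseteq> {..<n}" using A orbit_set_perm_sub[OF r] by auto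
    moreover have "B \<subseteq> {..<n}" using B orbit_set_perm_sub[OF r] by auto
    ultimately have "h A - {n} = A" "h B - {n} = B" using hZ by blast+
    then show "A = B" using \<open>h A = h B\<close> by metis
  qed
  then show ?thesis unfolding num_cycles_def g_def[symmetric] img1 img2
    by (simp add: card_image)
qed

datatype ty = TPk | TVa | TDA | TDD | TFx

definition tyof :: "(nat \<Rightarrow> nat) \<Rightarrow> nat \<Rightarrow> ty" where
  "tyof r i = (if r i = i then TFx
     else if r i < i then (if inv r i \<noteq> 0 \<and> inv r i < i then TPk else TDD)
     else (if inv r i \<noteq> 0 \<and> inv r i < i then TDA else TVa))"

lemma perm_lt: assumes r: "r permutes {..<n}" shows "r i < n \<longleftrightarrow> i < n"
  using permutes_in_image[OF r] by simp

lemma perm_n: assumes r: "r permutes {..<(n::nat)}" shows "r n = n"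
  by (rule permutes_not_in[OF r]) simp

lemma ins_perm: fixes r :: "nat \<Rightarrow> nat" and n b :: nat assumes r: "r permutes {..<n}" and b: "b \<le> n"
  shows "(transpose n b \<circ> r) permutes {..n}"
proof -
  have "r permutes {..n}" by (rule permutes_subset[OF r]) auto
  moreover have "transpose n b permutes {..n}" using b by (intro permutes_swap_id) auto
  ultimately show ?thesis by (rule permutes_compose)
qed

lemma inv_ins:
  fixes r :: "nat \<Rightarrow> nat" and n b :: nat
  assumes r: "r permutes {..<n}" and b: "b < n"
  shows "inv (transpose n b \<circ> r) j = (if j = n then inv r b else if j = b then n else inv r j)"
proof -
  define g where "g = transpose n b \<circ> r"
  define p where "p = inv r b"
  have g: "g = (\<lambda>i. if i = p then n else if i = n then b else r i)"
    unfolding g_def p_def using transp_comp_eq[OF r b] .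
  have gp: "g permutes {..n}" unfolding g_def using ins_perm[OF r] b by simp
  have rp: "r p = b" using permutes_inverses[OF r] p_def by simp
  have pn: "p < n" using perm_lt[OF r, of p] rp b by auto
  have "g (if j = n then p else if j = b then n else inv r j) = j"
  proof -
    have "inv r j \<noteq> p" if "j \<noteq> b" using that permutes_inverses[OF r] p_def by metis
    moreover have "inv r j \<noteq> n" if "j \<noteq> n" using that permutes_inverses[OF r] perm_n[OF r] by metis
    ultimately show ?thesis using b pn permutes_inverses[OF r] by (auto simp: g)
  qed
  then show ?thesis unfolding g_def[symmetric] p_def[symmetric]
    using permutes_inv_eq[OF gp] by metis
qed

definition "gg r n b = transpose n b \<circ> r"
definition "pp r b = inv r b"

context
  fixes r :: "nat \<Rightarrow> nat" and n b :: nat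
  assumes r: "r permutes {..<n}" and b: "b < n"
begin


lemma gg_eq: "gg r n b i = (if i = (pp r b) then n else if i = n then b else r i)"
  unfolding gg_def pp_def using transp_comp_eq[OF r b] by simp

lemma inv_gg: "inv (gg r n b) j = (if j = n then (pp r b) else if j = b then n else inv r j)"
  unfolding gg_def pp_def using inv_ins[OF r b] .

lemma r_pp: "r (pp r b) = b" by (simp add: pp_def permutes_inverses[OF r])

lemma pp_lt: "pp r b < n" using perm_lt[OF r, of "pp r b"] r_pp b by auto

lemma tyof_other: assumes "i \<noteq> (pp r b)" "i \<noteq> b" "i < n"
  shows "tyof (gg r n b) i = tyof r i"
  using assms by (simp add: tyof_def gg_eq inv_gg)

lemma tyof_n: "tyof (gg r n b) n = (if (pp r b) = 0 then TDD else TPk)"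
  using b pp_lt by (simp add: tyof_def gg_eq inv_gg)

lemma tyof_p: assumes "(pp r b) \<noteq> b" "0 < (pp r b)"
  shows "tyof (gg r n b) (pp r b) = (case tyof r (pp r b) of TPk \<Rightarrow> TDA | TDD \<Rightarrow> TVa | t \<Rightarrow> t)"
proof -
  have "inv (gg r n b) (pp r b) = inv r (pp r b)" using assms pp_lt by (simp add: inv_gg)
  then show ?thesis using assms pp_lt r_pp by (auto simp: tyof_def gg_eq)
qed

lemma tyof_b: assumes "(pp r b) \<noteq> b" "0 < b"
  shows "tyof (gg r n b) b = (case tyof r b of TPk \<Rightarrow> TDD | TDA \<Rightarrow> TVa | t \<Rightarrow> t)"
proof -
  have rb: "r b \<noteq> b" using assms r_pp permutes_inj[OF r] by (metis injD)
  have "r b < n" using perm_lt[OF r] b by simp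
  then show ?thesis using assms b rb by (auto simp: tyof_def gg_eq inv_gg)
qed

lemma tyof_fix: assumes "(pp r b) = b" "0 < b"
  shows "tyof (gg r n b) b = TVa"
  using assms b by (auto simp: tyof_def gg_eq inv_gg)

end

definition nfix :: "nat \<Rightarrow> (nat \<Rightarrow> nat) \<Rightarrow> nat" where
  "nfix n r = card {i \<in> {1..<n}. r i = i}"
definition jst :: "nat \<Rightarrow> (nat \<Rightarrow> nat) \<Rightarrow> nat" where
  "jst n r = num_cycles r {..<n} - nfix n r"
definition PiW :: "(ty \<Rightarrow> real) \<Rightarrow> nat \<Rightarrow> (nat \<Rightarrow> nat) \<Rightarrow> real" where
  "PiW w n r = (\<Prod>i\<in>{1..<n}. w (tyof r i))"
definition Rm :: "(ty \<Rightarrow> real) \<Rightarrow> nat \<Rightarrow> (nat \<Rightarrow> nat) \<Rightarrow> nat \<Rightarrow> real" where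
  "Rm w n r p = (\<Prod>i\<in>{1..<n}-{p}. w (tyof r i))"
definition Dm :: "(ty \<Rightarrow> real) \<Rightarrow> nat \<Rightarrow> (nat \<Rightarrow> nat) \<Rightarrow> ty \<Rightarrow> real" where
  "Dm w n r T = (\<Sum>p\<in>{1..<n}. if tyof r p = T then Rm w n r p else 0)"
definition Wt :: "real \<Rightarrow> (ty \<Rightarrow> real) \<Rightarrow> nat \<Rightarrow> (nat \<Rightarrow> nat) \<Rightarrow> real" where
  "Wt q w n r = q ^ jst n r * PiW w n r"

lemma nfix_le: assumes r: "r permutes {..<n}"
  shows "nfix n r \<le> num_cycles r {..<n}"
proof -
  let ?A = "{i \<in> {1..<n}. r i = i}"
  have o: "orbit_set r i = {i}" if "r i = i" for i
  proof -
    have "(r ^^ k) i = i" for k by (induct k) (auto simp: that)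
    then show ?thesis by (auto simp: orbit_set_def)
  qed
  have "inj_on (orbit_set r) ?A" by (rule inj_onI) (use o in auto)
  moreover have "orbit_set r ` ?A \<subseteq> orbit_set r ` {..<n}" by auto
  ultimately have "card (orbit_set r ` ?A) \<le> card (orbit_set r ` {..<n})"
    by (intro card_mono) auto
  then show ?thesis unfolding nfix_def num_cycles_def using card_image[OF \<open>inj_on _ ?A\<close>] by simp
qed

lemma jst_new: assumes r: "r permutes {..<n}" and n: "1 \<le> n"
  shows "jst (Suc n) r = jst n r"
proof -
  have "{i \<in> {1..<Suc n}. r i = i} = insert n {i \<in> {1..<n}. r i = i}"
    using n perm_n[OF r] by auto
  then have "nfix (Suc n) r = nfix n r + 1" unfolding nfix_def by simp
  moreover have "{..<Suc n} = {..n}" by auto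
  ultimately show ?thesis unfolding jst_def using cyc_fixed_new[OF r] by simp
qed

lemma PiW_new: assumes r: "r permutes {..<n}" and n: "1 \<le> n"
  shows "PiW w (Suc n) r = w TFx * PiW w n r"
proof -
  have "{1..<Suc n} = insert n {1..<n}" using n by auto
  moreover have "tyof r n = TFx" using perm_n[OF r] by (simp add: tyof_def)
  ultimately show ?thesis unfolding PiW_def by simp
qed

context
  fixes r :: "nat \<Rightarrow> nat" and n b :: nat
  assumes r: "r permutes {..<n}" and b: "b < n"
begin

lemma jst_ins: "jst (Suc n) (gg r n b) = jst n r + (if pp r b = b \<and> 0 < b then 1 else 0)"
proof -
  have s: "{i \<in> {1..<Suc n}. gg r n b i = i} = {i \<in> {1..<n}. r i = i} - {pp r b}"
    using b pp_lt[OF r b] r_pp[OF r b] by (auto simp: gg_eq[OF r b])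
  have c: "num_cycles (gg r n b) {..<Suc n} = num_cycles r {..<n}"
  proof -
    have "{..<Suc n} = {..n}" by auto
    then show ?thesis using cyc_ins[OF r b] by (simp add: gg_def)
  qed
  show ?thesis
  proof (cases "pp r b = b \<and> 0 < b")
    case True
    then have "pp r b \<in> {i \<in> {1..<n}. r i = i}" using b r_pp[OF r b] by auto
    then have "nfix (Suc n) (gg r n b) = nfix n r - 1" "nfix n r \<ge> 1" unfolding nfix_def s
      by (auto simp: card_Diff_singleton card_gt_0_iff Suc_le_eq)
    then show ?thesis unfolding jst_def c using True nfix_le[OF r] by simp
  next
    case False
    then have "pp r b \<notin> {i \<in> {1..<n}. r i = i}" using b r_pp[OF r b] by auto
    then have "nfix (Suc n) (gg r n b) = nfix n r" unfolding nfix_def s by simp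
    then show ?thesis unfolding jst_def c using False by simp
  qed
qed

lemma PiW_split: "PiW w (Suc n) (gg r n b) = w (tyof (gg r n b) n) * (\<Prod>i\<in>{1..<n}. w (tyof (gg r n b) i))"
proof -
  have "{1..<Suc n} = insert n {1..<n}" using b by auto
  then show ?thesis unfolding PiW_def by simp
qed

lemma PiW_top: assumes "pp r b = 0"
  shows "PiW w (Suc n) (gg r n b) = w TDD * PiW w n r"
proof -
  have "tyof (gg r n b) i = tyof r i" if "i \<in> {1..<n}" for i
  proof (cases "i = b")
    case True
    have "inv r b = 0" using assms by (simp add: pp_def)
    then have "tyof r b \<noteq> TPk \<and> tyof r b \<noteq> TDA" by (auto simp: tyof_def)
    then show ?thesis using True that assms tyof_b[OF r b] by (cases "tyof r b") auto
  next
    case False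
    then show ?thesis using that assms tyof_other[OF r b] by auto
  qed
  then show ?thesis unfolding PiW_split PiW_def using assms b tyof_n[OF r b] by simp
qed

lemma PiW_desc: assumes "0 < pp r b" "b < pp r b"
  shows "PiW w (Suc n) (gg r n b) = w TPk * w (case tyof r (pp r b) of TPk \<Rightarrow> TDA | TDD \<Rightarrow> TVa | t \<Rightarrow> t) * Rm w n r (pp r b)"
proof -
  let ?p = "pp r b"
  have pB: "?p \<in> {1..<n}" using assms pp_lt[OF r b] by auto
  have "tyof (gg r n b) i = tyof r i" if "i \<in> {1..<n} - {?p}" for i
  proof (cases "i = b")
    case True
    have "b < inv r b" using assms by (simp add: pp_def)
    then have "tyof r b \<noteq> TPk \<and> tyof r b \<noteq> TDA" by (auto simp: tyof_def)
    then show ?thesis using True that assms tyof_b[OF r b] by (cases "tyof r b") auto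
  next
    case False
    then show ?thesis using that assms tyof_other[OF r b] by auto
  qed
  then have "(\<Prod>i\<in>{1..<n}-{?p}. w (tyof (gg r n b) i)) = Rm w n r ?p"
    unfolding Rm_def by (intro prod.cong) auto
  then have "(\<Prod>i\<in>{1..<n}. w (tyof (gg r n b) i)) = w (tyof (gg r n b) ?p) * Rm w n r ?p"
    using prod.remove[OF _ pB, of "\<lambda>i. w (tyof (gg r n b) i)"] by simp
  then show ?thesis unfolding PiW_split using assms tyof_n[OF r b] tyof_p[OF r b] by simp
qed

lemma PiW_asc: assumes "0 < pp r b" "pp r b < b"
  shows "PiW w (Suc n) (gg r n b) = w TPk * w (case tyof r b of TPk \<Rightarrow> TDD | TDA \<Rightarrow> TVa | t \<Rightarrow> t) * Rm w n r b"
proof -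
  let ?p = "pp r b"
  have bB: "b \<in> {1..<n}" using assms b by auto
  have "tyof (gg r n b) i = tyof r i" if "i \<in> {1..<n} - {b}" for i
  proof (cases "i = ?p")
    case True
    have "r ?p = b" by (rule r_pp[OF r b])
    then have "tyof r ?p \<noteq> TPk \<and> tyof r ?p \<noteq> TDD" using assms by (auto simp: tyof_def)
    then show ?thesis using True that assms tyof_p[OF r b] by (cases "tyof r ?p") auto
  next
    case False
    then show ?thesis using that assms tyof_other[OF r b] by auto
  qed
  then have "(\<Prod>i\<in>{1..<n}-{b}. w (tyof (gg r n b) i)) = Rm w n r b"
    unfolding Rm_def by (intro prod.cong) auto
  then have "(\<Prod>i\<in>{1..<n}. w (tyof (gg r n b) i)) = w (tyof (gg r n b) b) * Rm w n r b"
    using prod.remove[OF _ bB, of "\<lambda>i. w (tyof (gg r n b) i)"] by simp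
  then show ?thesis unfolding PiW_split using assms tyof_n[OF r b] tyof_b[OF r b] by simp
qed

lemma PiW_fix: assumes "pp r b = b" "0 < b"
  shows "PiW w (Suc n) (gg r n b) = w TPk * w TVa * Rm w n r b"
proof -
  have bB: "b \<in> {1..<n}" using assms b by auto
  have "tyof (gg r n b) i = tyof r i" if "i \<in> {1..<n} - {b}" for i
    using that assms tyof_other[OF r b] by auto
  then have "(\<Prod>i\<in>{1..<n}-{b}. w (tyof (gg r n b) i)) = Rm w n r b"
    unfolding Rm_def by (intro prod.cong) auto
  then have "(\<Prod>i\<in>{1..<n}. w (tyof (gg r n b) i)) = w (tyof (gg r n b) b) * Rm w n r b"
    using prod.remove[OF _ bB, of "\<lambda>i. w (tyof (gg r n b) i)"] by simp
  then show ?thesis unfolding PiW_split using assms tyof_n[OF r b] tyof_fix[OF r b] by simp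
qed

end

lemma site_sum:
  fixes r :: "nat \<Rightarrow> nat" and n :: nat and q :: real
  assumes r: "r permutes {..<n}" and n: "1 \<le> n"
  shows "(\<Sum>b\<in>{..n}. Wt q w (Suc n) (transpose n b \<circ> r)) =
     q ^ jst n r * ((w TFx + w TDD) * PiW w n r + w TPk * (w TDA + w TDD) * Dm w n r TPk
        + w TPk * w TVa * (Dm w n r TDD + Dm w n r TDA + q * Dm w n r TFx))"
proof -
  define F where "F b = Wt q w (Suc n) (transpose n b \<circ> r)" for b
  define B where "B = {1..<n}"
  define D where "D = {p \<in> B. tyof r p = TPk \<or> tyof r p = TDD}"
  define E where "E = {p \<in> B. tyof r p = TPk \<or> tyof r p = TDA \<or> tyof r p = TFx}"
  define j where "j = jst n r"
  have ggF: "F b = Wt q w (Suc n) (gg r n b)" for b by (simp add: F_def gg_def)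
  have r0: "r 0 < n" using perm_lt[OF r] n by simp
  have inv0: "inv r (r 0) = 0" using permutes_inverses[OF r] by simp
  have invlt: "inv r b < n" if "b < n" for b using perm_lt[OF r, of "inv r b"] permutes_inverses[OF r] that by simp
  have rinv: "r (inv r b) = b" for b using permutes_inverses[OF r] by simp
  have invr: "inv r (r b) = b" for b using permutes_inverses[OF r] by simp
  have finB: "finite B" by (simp add: B_def)
  have DB: "D \<subseteq> B" and EB: "E \<subseteq> B" by (auto simp: D_def E_def)
  have Ddesc: "r p < p" if "p \<in> D" for p using that by (auto simp: D_def tyof_def split: if_splits)
  have rD: "r ` D \<subseteq> {..<n}" using DB perm_lt[OF r] by (auto simp: B_def)
  have cover: "{..n} = insert n (insert (r 0) (r ` D \<union> E))"
  proof
    show "insert n (insert (r 0) (r ` D \<union> E)) \<subseteq> {..n}" using rD EB r0 by (auto simp: B_def)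
  next
    show "{..n} \<subseteq> insert n (insert (r 0) (r ` D \<union> E))"
    proof
      fix b assume "b \<in> {..n}"
      show "b \<in> insert n (insert (r 0) (r ` D \<union> E))"
      proof (cases "b = n")
        case False
        then have bn: "b < n" using \<open>b \<in> {..n}\<close> by auto
        define p where "p = inv r b"
        have pn: "p < n" using invlt[OF bn] p_def by simp
        have rp: "r p = b" using rinv p_def by simp
        consider "p = 0" | "p \<noteq> 0" "b = p" | "p \<noteq> 0" "b < p" | "p \<noteq> 0" "p < b" by linarith
        then show ?thesis
        proof cases
          case 1 then show ?thesis using rp by auto
        next
          case 2 then have "b \<in> E" using rp pn by (auto simp: E_def B_def tyof_def)
          then show ?thesis by auto
        next
          case 3 then have "p \<in> D" using rp pn by (auto simp: D_def B_def tyof_def)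
          then show ?thesis using rp by auto
        next
          case 4 then have "b \<in> E" using rp pn bn p_def by (auto simp: E_def B_def tyof_def)
          then show ?thesis by auto
        qed
      qed simp
    qed
  qed
  have d1: "n \<notin> insert (r 0) (r ` D \<union> E)" using rD EB r0 by (auto simp: B_def)
  have d2: "r 0 \<notin> r ` D \<union> E"
  proof
    assume "r 0 \<in> r ` D \<union> E"
    then show False
    proof
      assume "r 0 \<in> r ` D"
      then obtain p where "p \<in> D" "r 0 = r p" by auto
      then have "p = 0" using invr by metis
      then show False using \<open>p \<in> D\<close> by (auto simp: D_def B_def)
    next
      assume "r 0 \<in> E"
      then show False using inv0 invr[of "r 0"] by (auto simp: E_def B_def tyof_def split: if_splits)
    qed
  qed
  have d3: "r ` D \<inter> E = {}"
  proof (rule ccontr)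
    assume "r ` D \<inter> E \<noteq> {}"
    then obtain p where p: "p \<in> D" "r p \<in> E" by auto
    have "r p < p" using Ddesc p(1) .
    then show False using p(2) invr[of p] invr[of "r p"] by (auto simp: E_def B_def tyof_def split: if_splits)
  qed
  have injD: "inj_on r D" using permutes_inj[OF r] by (meson inj_on_subset subset_UNIV)
  have finD: "finite D" "finite E" using finB DB EB finite_subset by blast+
  have sumsplit: "sum F {..n} = F n + (F (r 0) + (sum (F \<circ> r) D + sum F E))"
  proof -
    have "sum F {..n} = F n + sum F (insert (r 0) (r ` D \<union> E))"
      unfolding cover using d1 finD by (simp)
    also have "sum F (insert (r 0) (r ` D \<union> E)) = F (r 0) + sum F (r ` D \<union> E)"
      using d2 finD by simp
    also have "sum F (r ` D \<union> E) = sum F (r ` D) + sum F E"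
      using d3 finD by (simp add: sum.union_disjoint)
    also have "sum F (r ` D) = sum (F \<circ> r) D" using sum.reindex[OF injD] by simp
    finally show ?thesis .
  qed
  have Fn: "F n = q ^ j * (w TFx * PiW w n r)"
    using jst_new[OF r n] PiW_new[OF r n] by (simp add: F_def Wt_def j_def)
  have Fr0: "F (r 0) = q ^ j * (w TDD * PiW w n r)"
  proof -
    have pp0: "pp r (r 0) = 0" by (simp add: pp_def inv0)
    show ?thesis using jst_ins[OF r r0] PiW_top[OF r r0 pp0] pp0 by (simp add: ggF Wt_def j_def)
  qed
  have FD: "F (r p) = q ^ j * (w TPk * (if tyof r p = TPk then w TDA else w TVa) * Rm w n r p)"
    if p: "p \<in> D" for p
  proof -
    have pB: "0 < p" "p < n" using p by (auto simp: D_def B_def)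
    have b: "r p < n" using perm_lt[OF r] pB by simp
    have ppp: "pp r (r p) = p" by (simp add: pp_def invr)
    have lt: "r p < p" using Ddesc[OF p] .
    have "tyof r p = TPk \<or> tyof r p = TDD" using p by (simp add: D_def)
    then show ?thesis using jst_ins[OF r b] PiW_desc[OF r b, of w] ppp lt pB
      by (auto simp: ggF Wt_def j_def)
  qed
  have FE: "F b = q ^ (j + (if tyof r b = TFx then 1 else 0)) * (w TPk *
      (if tyof r b = TPk then w TDD else w TVa) * Rm w n r b)"
    if bE: "b \<in> E" for b
  proof -
    have bB: "0 < b" "b < n" using bE by (auto simp: E_def B_def)
    show ?thesis
    proof (cases "tyof r b = TFx")
      case True
      then have "r b = b" by (auto simp: tyof_def split: if_splits)
      then have ppb: "pp r b = b" using invr[of b] by (simp add: pp_def)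
      show ?thesis using jst_ins[OF r bB(2)] PiW_fix[OF r bB(2) ppb bB(1)] ppb bB True
        by (simp add: ggF Wt_def j_def)
    next
      case False
      then have ty: "tyof r b = TPk \<or> tyof r b = TDA" using bE by (auto simp: E_def)
      then have "inv r b \<noteq> 0 \<and> inv r b < b" "r b \<noteq> b"
        by (auto simp: tyof_def split: if_splits)
      then have pb: "0 < pp r b" "pp r b < b" "pp r b \<noteq> b" by (auto simp: pp_def)
      show ?thesis using jst_ins[OF r bB(2)] PiW_asc[OF r bB(2) pb(1,2), of w] pb ty False
        by (auto simp: ggF Wt_def j_def)
    qed
  qed
  define G where "G p = (if tyof r p = TPk then q ^ j * (w TPk * (w TDA + w TDD) * Rm w n r p)
     else if tyof r p = TDD then q ^ j * (w TPk * w TVa * Rm w n r p)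
     else if tyof r p = TDA then q ^ j * (w TPk * w TVa * Rm w n r p)
     else if tyof r p = TFx then q ^ j * (q * (w TPk * w TVa * Rm w n r p)) else 0)" for p
  have s1: "sum (F \<circ> r) D = (\<Sum>p\<in>B. if tyof r p = TPk \<or> tyof r p = TDD then F (r p) else 0)"
    unfolding D_def using sum.inter_filter[OF finB] by (simp add: comp_def)
  have s2: "sum F E = (\<Sum>p\<in>B. if tyof r p = TPk \<or> tyof r p = TDA \<or> tyof r p = TFx then F p else 0)"
    unfolding E_def using sum.inter_filter[OF finB] by simp
  have s3: "sum (F \<circ> r) D + sum F E = sum G B"
    unfolding s1 s2 sum.distrib[symmetric]
  proof (rule sum.cong[OF refl])
    fix p assume pB: "p \<in> B"
    show "(if tyof r p = TPk \<or> tyof r p = TDD then F (r p) else 0) +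
         (if tyof r p = TPk \<or> tyof r p = TDA \<or> tyof r p = TFx then F p else 0) = G p"
    proof (cases "tyof r p")
      case TPk
      then have "p \<in> D" "p \<in> E" using pB by (auto simp: D_def E_def)
      then show ?thesis using FD FE TPk by (simp add: G_def algebra_simps)
    next
      case TDD
      then have "p \<in> D" using pB by (auto simp: D_def)
      then show ?thesis using FD TDD by (simp add: G_def algebra_simps)
    next
      case TDA
      then have "p \<in> E" using pB by (auto simp: E_def)
      then show ?thesis using FE TDA by (simp add: G_def algebra_simps)
    next
      case TFx
      then have "p \<in> E" using pB by (auto simp: E_def)
      then show ?thesis using FE TFx by (simp add: G_def algebra_simps)
    next
      case TVa
      then show ?thesis by (simp add: G_def)
    qed
  qed
  have s4: "sum G B = q ^ j * (w TPk * (w TDA + w TDD) * Dm w n r TPk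
        + w TPk * w TVa * (Dm w n r TDD + Dm w n r TDA + q * Dm w n r TFx))"
  proof -
    have "sum G B = (\<Sum>p\<in>B. q ^ j * (w TPk * (w TDA + w TDD)) * (if tyof r p = TPk then Rm w n r p else 0)
       + q ^ j * (w TPk * w TVa) * (if tyof r p = TDD then Rm w n r p else 0)
       + q ^ j * (w TPk * w TVa) * (if tyof r p = TDA then Rm w n r p else 0)
       + q ^ j * (q * (w TPk * w TVa)) * (if tyof r p = TFx then Rm w n r p else 0))"
      by (rule sum.cong[OF refl]) (simp add: G_def)
    also have "\<dots> = q ^ j * (w TPk * (w TDA + w TDD) * Dm w n r TPk
        + w TPk * w TVa * (Dm w n r TDD + Dm w n r TDA + q * Dm w n r TFx))"
      unfolding sum.distrib sum_distrib_left[symmetric] Dm_def B_def by (simp add: algebra_simps)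
    finally show ?thesis .
  qed
  show ?thesis unfolding F_def[symmetric] sumsplit s3 s4 Fn Fr0 j_def[symmetric]
    by (simp add: algebra_simps)
qed

definition GG :: "real \<Rightarrow> (ty \<Rightarrow> real) \<Rightarrow> nat \<Rightarrow> real" where
  "GG q w n = (\<Sum>r\<in>{r. r permutes {..<n}}. Wt q w n r)"

lemma GG_rec:
  fixes q :: real
  assumes n: "1 \<le> n"
  shows "GG q w (Suc n) = (\<Sum>r\<in>{r. r permutes {..<n}}. q ^ jst n r * ((w TFx + w TDD) * PiW w n r
     + w TPk * (w TDA + w TDD) * Dm w n r TPk
     + w TPk * w TVa * (Dm w n r TDD + Dm w n r TDA + q * Dm w n r TFx)))"
proof -
  have e: "{..<Suc n} = insert n {..<n}" by auto
  have "GG q w (Suc n) = (\<Sum>b\<in>insert n {..<n}. \<Sum>r\<in>{r. r permutes {..<n}}. Wt q w (Suc n) (transpose n b \<circ> r))"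
    unfolding GG_def e by (rule sum_over_permutations_insert) auto
  also have "\<dots> = (\<Sum>r\<in>{r. r permutes {..<n}}. \<Sum>b\<in>{..n}. Wt q w (Suc n) (transpose n b \<circ> r))"
    by (subst sum.swap) (simp only: e[symmetric] lessThan_Suc_atMost)
  also have "\<dots> = (\<Sum>r\<in>{r. r permutes {..<n}}. q ^ jst n r * ((w TFx + w TDD) * PiW w n r
     + w TPk * (w TDA + w TDD) * Dm w n r TPk
     + w TPk * w TVa * (Dm w n r TDD + Dm w n r TDA + q * Dm w n r TFx)))"
    by (rule sum.cong[OF refl], rule site_sum) (use n in auto)
  finally show ?thesis .
qed

definition ev :: "(real \<times> nat \<times> nat \<times> nat) list \<Rightarrow> real \<Rightarrow> real \<Rightarrow> real \<Rightarrow> real" where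
  "ev L X S T = (\<Sum>(c,k,l,m)\<leftarrow>L. c * X^k * S^l * T^m)"

definition dX :: "(real \<times> nat \<times> nat \<times> nat) list \<Rightarrow> (real \<times> nat \<times> nat \<times> nat) list" where
  "dX L = map (\<lambda>(c,k,l,m). (c * real k, k - 1, l, m)) L"
definition dS :: "(real \<times> nat \<times> nat \<times> nat) list \<Rightarrow> (real \<times> nat \<times> nat \<times> nat) list" where
  "dS L = map (\<lambda>(c,k,l,m). (c * real l, k, l - 1, m)) L"
definition dT :: "(real \<times> nat \<times> nat \<times> nat) list \<Rightarrow> (real \<times> nat \<times> nat \<times> nat) list" where
  "dT L = map (\<lambda>(c,k,l,m). (c * real m, k, l, m - 1)) L"
definition sc :: "real \<Rightarrow> nat \<Rightarrow> nat \<Rightarrow> nat \<Rightarrow> (real \<times> nat \<times> nat \<times> nat) list \<Rightarrow> (real \<times> nat \<times> nat \<times> nat) list" where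
  "sc c' k' l' m' L = map (\<lambda>(c,k,l,m). (c' * c, k + k', l + l', m + m')) L"

lemma ev_Nil[simp]: "ev [] X S T = 0" by (simp add: ev_def)
lemma ev_Cons[simp]: "ev ((c,k,l,m) # L) X S T = c * X^k * S^l * T^m + ev L X S T"
  by (simp add: ev_def)
lemma ev_append[simp]: "ev (L1 @ L2) X S T = ev L1 X S T + ev L2 X S T"
  by (simp add: ev_def)

lemma ev_sc: "ev (sc c' k' l' m' L) X S T = c' * X^k' * S^l' * T^m' * ev L X S T"
  by (induct L) (auto simp: sc_def power_add algebra_simps)

lemma mono_deriv:
  "((\<lambda>s. c0 * (X + a*s)^k * (S + b*s)^l * (T + c*s)^m) has_real_derivative
     (a * (c0 * real k * X^(k-1) * S^l * T^m) + b * (c0 * real l * X^k * S^(l-1) * T^m)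
      + c * (c0 * real m * X^k * S^l * T^(m-1)))) (at 0)"
  by (auto intro!: derivative_eq_intros simp: algebra_simps)

lemma ev_deriv:
  "((\<lambda>s. ev L (X + a*s) (S + b*s) (T + c*s)) has_real_derivative
     (a * ev (dX L) X S T + b * ev (dS L) X S T + c * ev (dT L) X S T)) (at 0)"
proof (induct L)
  case Nil
  then show ?case by (simp add: dX_def dS_def dT_def)
next
  case (Cons x L)
  obtain c0 k l m where x: "x = (c0, k, l, m)" by (cases x) auto
  show ?case
    using DERIV_add[OF mono_deriv[of c0 X a k S b l T c m] Cons]
    by (simp add: x dX_def dS_def dT_def algebra_simps)
qed

lemma PiW_deriv:
  "((\<lambda>s. PiW (w(T0 := w T0 + s)) n r) has_real_derivative Dm w n r T0) (at 0)"
proof -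
  define f where "f = (\<lambda>i s. (w(T0 := w T0 + s)) (tyof r i))"
  define f' where "f' i = (if tyof r i = T0 then 1 else (0::real))" for i
  have fi: "(f i has_real_derivative f' i) (at 0)" for i
    by (cases "tyof r i = T0") (auto simp: f_def f'_def fun_upd_def intro!: derivative_eq_intros)
  have "((\<lambda>u. \<Prod>i\<in>{1..<n}. f i u) has_real_derivative (\<Sum>i\<in>{1..<n}. f' i * (\<Prod>j\<in>{1..<n}-{i}. f j 0))) (at 0)"
    by (rule has_field_derivative_prod) (rule fi)
  moreover have "(\<Sum>i\<in>{1..<n}. f' i * (\<Prod>j\<in>{1..<n}-{i}. f j 0)) = Dm w n r T0"
  proof -
    have f0: "f j 0 = w (tyof r j)" for j by (simp add: f_def)
    show ?thesis unfolding Dm_def Rm_def f0 by (rule sum.cong[OF refl]) (simp add: f'_def)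
  qed
  ultimately show ?thesis unfolding PiW_def f_def by simp
qed

lemma GG_deriv:
  "((\<lambda>s. GG q (w(T0 := w T0 + s)) n) has_real_derivative
     (\<Sum>r\<in>{r. r permutes {..<n}}. q ^ jst n r * Dm w n r T0)) (at 0)"
  unfolding GG_def Wt_def
  by (intro DERIV_sum DERIV_cmult PiW_deriv)

abbreviation "XX w \<equiv> w TPk * w TVa"
abbreviation "SS w \<equiv> w TDA + w TDD"
abbreviation "TT w \<equiv> w TDD + w TFx"

context
  fixes q :: real and n :: nat and L :: "(real \<times> nat \<times> nat \<times> nat) list"
  assumes IH: "\<forall>w. GG q w n = ev L (XX w) (SS w) (TT w)"
begin

lemma dPk: "(\<Sum>r\<in>{r. r permutes {..<n}}. q ^ jst n r * Dm w n r TPk) = w TVa * ev (dX L) (XX w) (SS w) (TT w)"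
proof -
  have eq: "(\<lambda>s. GG q (w(TPk := w TPk + s)) n) = (\<lambda>s. ev L (XX w + w TVa * s) (SS w + 0 * s) (TT w + 0 * s))"
    by (rule ext) (simp add: IH algebra_simps)
  show ?thesis using GG_deriv[of q w TPk n] ev_deriv[of L "XX w" "w TVa" "SS w" 0 "TT w" 0]
    unfolding eq by (auto intro: DERIV_unique)
qed

lemma dDA: "(\<Sum>r\<in>{r. r permutes {..<n}}. q ^ jst n r * Dm w n r TDA) = ev (dS L) (XX w) (SS w) (TT w)"
proof -
  have eq: "(\<lambda>s. GG q (w(TDA := w TDA + s)) n) = (\<lambda>s. ev L (XX w + 0 * s) (SS w + 1 * s) (TT w + 0 * s))"
    by (rule ext) (simp add: IH algebra_simps)
  show ?thesis using GG_deriv[of q w TDA n] ev_deriv[of L "XX w" 0 "SS w" 1 "TT w" 0]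
    unfolding eq by (auto intro: DERIV_unique)
qed

lemma dDD: "(\<Sum>r\<in>{r. r permutes {..<n}}. q ^ jst n r * Dm w n r TDD) = ev (dS L) (XX w) (SS w) (TT w) + ev (dT L) (XX w) (SS w) (TT w)"
proof -
  have eq: "(\<lambda>s. GG q (w(TDD := w TDD + s)) n) = (\<lambda>s. ev L (XX w + 0 * s) (SS w + 1 * s) (TT w + 1 * s))"
    by (rule ext) (simp add: IH algebra_simps)
  show ?thesis using GG_deriv[of q w TDD n] ev_deriv[of L "XX w" 0 "SS w" 1 "TT w" 1]
    unfolding eq by (auto intro: DERIV_unique)
qed

lemma dFx: "(\<Sum>r\<in>{r. r permutes {..<n}}. q ^ jst n r * Dm w n r TFx) = ev (dT L) (XX w) (SS w) (TT w)"
proof -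
  have eq: "(\<lambda>s. GG q (w(TFx := w TFx + s)) n) = (\<lambda>s. ev L (XX w + 0 * s) (SS w + 0 * s) (TT w + 1 * s))"
    by (rule ext) (simp add: IH algebra_simps)
  show ?thesis using GG_deriv[of q w TFx n] ev_deriv[of L "XX w" 0 "SS w" 0 "TT w" 1]
    unfolding eq by (auto intro: DERIV_unique)
qed

lemma GG_step:
  assumes n: "1 \<le> n"
  shows "GG q w (Suc n) = ev (sc 1 0 0 1 L @ sc 1 1 1 0 (dX L) @ sc 2 1 0 0 (dS L) @ sc (1+q) 1 0 0 (dT L)) (XX w) (SS w) (TT w)"
proof -
  let ?R = "{r. r permutes {..<n}}"
  let ?s = "\<lambda>T. (\<Sum>r\<in>?R. q ^ jst n r * Dm w n r T)"
  have "GG q w (Suc n) = (w TFx + w TDD) * GG q w n + w TPk * (w TDA + w TDD) * ?s TPk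
      + w TPk * w TVa * (?s TDD + ?s TDA + q * ?s TFx)"
    by (subst GG_rec[OF n]) (simp add: GG_def Wt_def sum.distrib sum_distrib_left algebra_simps)
  also have "\<dots> = ev (sc 1 0 0 1 L @ sc 1 1 1 0 (dX L) @ sc 2 1 0 0 (dS L) @ sc (1+q) 1 0 0 (dT L)) (XX w) (SS w) (TT w)"
    unfolding dPk dDA dDD dFx by (simp add: ev_sc algebra_simps IH)
  finally show ?thesis .
qed

end

lemma GG_one: "GG q w 1 = q"
proof -
  have "{r. r permutes {..<Suc 0}} = {id}" by (auto simp: lessThan_Suc)
  moreover have "jst 1 id = 1"
    by (simp add: jst_def nfix_def num_cycles_def lessThan_Suc)
  ultimately show ?thesis by (simp add: GG_def Wt_def PiW_def)
qed

lemma GG_inv: assumes "1 \<le> n"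
  shows "\<exists>L. \<forall>w. GG q w n = ev L (XX w) (SS w) (TT w)"
  using assms
proof (induct n rule: dec_induct)
  case base
  show ?case by (rule exI[of _ "[(q,0,0,0)]"]) (use GG_one[unfolded One_nat_def] in simp)
next
  case (step m)
  then obtain L where L: "\<forall>w. GG q w m = ev L (XX w) (SS w) (TT w)" by blast
  show ?case using GG_step[OF L step(1)] by blast
qed

definition rho :: "nat \<Rightarrow> (nat \<Rightarrow> nat) \<Rightarrow> nat \<Rightarrow> nat" where
  "rho n \<sigma> = (\<lambda>i. if i = 0 then \<sigma> n - 1 else if i < n then \<sigma> i - 1 else i)"
definition sig :: "nat \<Rightarrow> (nat \<Rightarrow> nat) \<Rightarrow> nat \<Rightarrow> nat" where
  "sig n r = (\<lambda>i. if 1 \<le> i \<and> i < n then r i + 1 else if i = n then r 0 + 1 else i)"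

lemma rho_perm: assumes s: "\<sigma> permutes {1..n}" and n: "1 \<le> n"
  shows "rho n \<sigma> permutes {..<n}"
proof (rule bij_imp_permutes)
  have b1: "bij_betw (\<lambda>i. if i = 0 then n else i) {..<n} {1..n}"
    by (rule bij_betw_byWitness[where f'="\<lambda>j. if j = n then 0 else j"]) (use n in auto)
  have b2: "bij_betw \<sigma> {1..n} {1..n}" using permutes_imp_bij[OF s] .
  have b3: "bij_betw (\<lambda>x. x - 1) {1..n} {..<n}"
    by (rule bij_betw_byWitness[where f'="\<lambda>j. j + 1"]) auto
  have "bij_betw ((\<lambda>x. x - 1) \<circ> (\<sigma> \<circ> (\<lambda>i. if i = 0 then n else i))) {..<n} {..<n}"
    using bij_betw_trans[OF bij_betw_trans[OF b1 b2] b3] .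
  moreover have "((\<lambda>x. x - 1) \<circ> (\<sigma> \<circ> (\<lambda>i. if i = 0 then n else i))) i = rho n \<sigma> i" if "i \<in> {..<n}" for i
    using that by (simp add: rho_def)
  ultimately show "bij_betw (rho n \<sigma>) {..<n} {..<n}" using bij_betw_cong by blast
next
  fix x assume "x \<notin> {..<n}"
  then show "rho n \<sigma> x = x" using n by (auto simp: rho_def)
qed

lemma sig_perm: assumes r: "r permutes {..<n}" and n: "1 \<le> n"
  shows "sig n r permutes {1..n}"
proof (rule bij_imp_permutes)
  have b1: "bij_betw (\<lambda>i. if i = n then 0 else i) {1..n} {..<n}"
    by (rule bij_betw_byWitness[where f'="\<lambda>j. if j = 0 then n else j"]) (use n in auto)
  have b2: "bij_betw r {..<n} {..<n}" using permutes_imp_bij[OF r] .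
  have b3: "bij_betw (\<lambda>x. x + 1) {..<n} {1..n}"
    by (rule bij_betw_byWitness[where f'="\<lambda>j. j - 1"]) auto
  have "bij_betw ((\<lambda>x. x + 1) \<circ> (r \<circ> (\<lambda>i. if i = n then 0 else i))) {1..n} {1..n}"
    using bij_betw_trans[OF bij_betw_trans[OF b1 b2] b3] .
  moreover have "((\<lambda>x. x + 1) \<circ> (r \<circ> (\<lambda>i. if i = n then 0 else i))) i = sig n r i" if "i \<in> {1..n}" for i
    using that by (auto simp: sig_def)
  ultimately show "bij_betw (sig n r) {1..n} {1..n}" using bij_betw_cong by blast
next
  fix x assume "x \<notin> {1..n}"
  then show "sig n r x = x" using n by (auto simp: sig_def)
qed

lemma rho_bij: assumes n: "1 \<le> n"
  shows "bij_betw (rho n) (perms n) {r. r permutes {..<n}}"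
proof (rule bij_betw_byWitness[where f'="sig n"])
  show "\<forall>a\<in>perms n. sig n (rho n a) = a"
  proof
    fix s assume "s \<in> perms n"
    then have s: "s permutes {1..n}" by (simp add: perms_def)
    have "s i \<in> {1..n}" if "i \<in> {1..n}" for i using permutes_in_image[OF s] that by simp
    moreover have "s i = i" if "i \<notin> {1..n}" for i using permutes_not_in[OF s] that by simp
    ultimately show "sig n (rho n s) = s" using n
      by (auto simp: fun_eq_iff sig_def rho_def) (metis Suc_pred order.strict_trans2 zero_less_Suc)+
  qed
  show "\<forall>a\<in>{r. r permutes {..<n}}. rho n (sig n a) = a"
  proof
    fix r assume "r \<in> {r. r permutes {..<n}}"
    then have r: "r permutes {..<n}" by simp
    have "r i = i" if "\<not> i < n" for i using permutes_not_in[OF r] that by simp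
    then show "rho n (sig n r) = r" using n by (auto simp: fun_eq_iff sig_def rho_def)
  qed
  show "rho n ` perms n \<subseteq> {r. r permutes {..<n}}" using rho_perm n by (auto simp: perms_def)
  show "sig n ` {r. r permutes {..<n}} \<subseteq> perms n" using sig_perm n by (auto simp: perms_def)
qed

context
  fixes n :: nat and \<sigma> :: "nat \<Rightarrow> nat"
  assumes s: "\<sigma> permutes {1..n}" and n: "1 \<le> n"
begin

lemma rperm: "rho n \<sigma> permutes {..<n}" using rho_perm[OF s n] .
lemma r0: "rho n \<sigma> 0 < n" using perm_lt[OF rperm] n by simp
lemma inv_r0: "inv (rho n \<sigma>) (rho n \<sigma> 0) = 0" using permutes_inverses[OF rperm] by simp

lemma star_rho: "star n \<sigma> = transpose n (rho n \<sigma> 0) \<circ> rho n \<sigma>"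
  unfolding transp_comp_eq[OF rperm r0] inv_r0
  using n by (auto simp: fun_eq_iff star_def rho_def)

lemma cyc_rho: "cyc_star n \<sigma> = num_cycles (rho n \<sigma>) {..<n}"
  unfolding cyc_star_def star_rho using cyc_ins[OF rperm r0] by (simp add: atLeast0AtMost)

lemma star_mid: "i \<in> {1..<n} \<Longrightarrow> star n \<sigma> i = rho n \<sigma> i"
  by (auto simp: star_def rho_def)

lemma fix_rho: "fix_star n \<sigma> = nfix n (rho n \<sigma>)"
proof -
  have "{i \<in> {1..n-1}. star n \<sigma> i = i} = {i \<in> {1..<n}. rho n \<sigma> i = i}"
    using n star_mid by auto
  then show ?thesis by (simp add: fix_star_def nfix_def)
qed

lemma tyof_ge: "rho n \<sigma> i \<ge> i \<longleftrightarrow> (tyof (rho n \<sigma>) i = TVa \<or> tyof (rho n \<sigma>) i = TDA \<or> tyof (rho n \<sigma>) i = TFx)"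
  by (auto simp: tyof_def)

lemma exc_rho: "exc n \<sigma> = card {i \<in> {1..<n}. tyof (rho n \<sigma>) i = TVa \<or> tyof (rho n \<sigma>) i = TDA \<or> tyof (rho n \<sigma>) i = TFx}"
proof -
  have sn: "\<sigma> n \<le> n" using permutes_in_image[OF s, of n] n by auto
  have si: "\<sigma> i \<ge> 1" if "i \<in> {1..n}" for i using permutes_in_image[OF s, of i] that by auto
  have "{i \<in> {1..n}. \<sigma> i > i} = {i \<in> {1..<n}. rho n \<sigma> i \<ge> i}"
  proof (rule set_eqI)
    fix i
    show "i \<in> {i \<in> {1..n}. \<sigma> i > i} \<longleftrightarrow> i \<in> {i \<in> {1..<n}. rho n \<sigma> i \<ge> i}"
      using sn si[of i] by (cases "i = n") (auto simp: rho_def)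
  qed
  then show ?thesis unfolding exc_def tyof_ge by simp
qed

lemma cpk_rho: "cpk_star n \<sigma> = card {i \<in> {1..<n}. tyof (rho n \<sigma>) i = TPk}"
proof -
  let ?r = "rho n \<sigma>"
  have iv: "inv (star n \<sigma>) j = (if j = n then 0 else if j = ?r 0 then n else inv ?r j)" for j
    unfolding star_rho inv_ins[OF rperm r0] inv_r0 by simp
  have "{i \<in> {1..n-1}. inv (star n \<sigma>) i < i \<and> i > star n \<sigma> i} = {i \<in> {1..<n}. tyof ?r i = TPk}"
  proof (rule set_eqI)
    fix i
    show "i \<in> {i \<in> {1..n-1}. inv (star n \<sigma>) i < i \<and> i > star n \<sigma> i} \<longleftrightarrow> i \<in> {i \<in> {1..<n}. tyof ?r i = TPk}"
    proof (cases "i \<in> {1..<n}")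
      case True
      have "inv ?r i = 0 \<longleftrightarrow> i = ?r 0" using permutes_inverses[OF rperm] by metis
      then show ?thesis using True star_mid[OF True] iv[of i] n
        by (auto simp: tyof_def)
    next
      case False then show ?thesis using n by auto
    qed
  qed
  then show ?thesis by (simp add: cpk_star_def)
qed

end

lemma pow_card: "finite A \<Longrightarrow> (c::real) ^ card {i \<in> A. P i} = (\<Prod>i\<in>A. if P i then c else 1)"
  using prod.inter_filter[of A "\<lambda>_. c" P] by simp

definition wA :: "real \<Rightarrow> ty \<Rightarrow> real" where
  "wA t T = (case T of TPk \<Rightarrow> 1 | TDD \<Rightarrow> 1 | _ \<Rightarrow> t)"
definition wP :: "real \<Rightarrow> real \<Rightarrow> ty \<Rightarrow> real" where
  "wP x t T = (case T of TPk \<Rightarrow> x | TDD \<Rightarrow> 1 | _ \<Rightarrow> t)"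

lemma A_GG: assumes n: "1 \<le> n" shows "A_poly n q t = GG q (wA t) n"
proof -
  have "A_poly n q t = (\<Sum>\<sigma>\<in>perms n. Wt q (wA t) n (rho n \<sigma>))"
    unfolding A_poly_def
  proof (rule sum.cong[OF refl])
    fix \<sigma> assume "\<sigma> \<in> perms n"
    then have s: "\<sigma> permutes {1..n}" by (simp add: perms_def)
    have "t ^ exc n \<sigma> = PiW (wA t) n (rho n \<sigma>)"
      unfolding exc_rho[OF s n] pow_card[OF finite_atLeastLessThan] PiW_def
      by (rule prod.cong[OF refl]) (auto simp: wA_def split: ty.split)
    then show "q ^ (cyc_star n \<sigma> - fix_star n \<sigma>) * t ^ exc n \<sigma> = Wt q (wA t) n (rho n \<sigma>)"
      by (simp add: Wt_def jst_def cyc_rho[OF s n] fix_rho[OF s n])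
  qed
  also have "\<dots> = GG q (wA t) n" unfolding GG_def
    by (rule sum.reindex_bij_betw[OF rho_bij[OF n]])
  finally show ?thesis .
qed

lemma P_GG: assumes n: "1 \<le> n" shows "P_poly n q x t = GG q (wP x t) n"
proof -
  have "P_poly n q x t = (\<Sum>\<sigma>\<in>perms n. Wt q (wP x t) n (rho n \<sigma>))"
    unfolding P_poly_def
  proof (rule sum.cong[OF refl])
    fix \<sigma> assume "\<sigma> \<in> perms n"
    then have s: "\<sigma> permutes {1..n}" by (simp add: perms_def)
    have "x ^ cpk_star n \<sigma> * t ^ exc n \<sigma> = PiW (wP x t) n (rho n \<sigma>)"
      unfolding exc_rho[OF s n] cpk_rho[OF s n] pow_card[OF finite_atLeastLessThan] PiW_def
        prod.distrib[symmetric]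
      by (rule prod.cong[OF refl]) (auto simp: wP_def split: ty.split)
    then show "q ^ (cyc_star n \<sigma> - fix_star n \<sigma>) * x ^ cpk_star n \<sigma> * t ^ exc n \<sigma> = Wt q (wP x t) n (rho n \<sigma>)"
      by (simp add: Wt_def jst_def cyc_rho[OF s n] fix_rho[OF s n] mult.assoc)
  qed
  also have "\<dots> = GG q (wP x t) n" unfolding GG_def
    by (rule sum.reindex_bij_betw[OF rho_bij[OF n]])
  finally show ?thesis .
qed

lemma GG_hom: "GG q (\<lambda>T. c * w T) n = c ^ (n - 1) * GG q w n"
proof -
  have "PiW (\<lambda>T. c * w T) n r = c ^ (n - 1) * PiW w n r" for r
    unfolding PiW_def by (simp add: prod.distrib)
  then show ?thesis unfolding GG_def Wt_def by (simp add: sum_distrib_left algebra_simps)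
qed

theorem theorem3p5:
  fixes n :: nat and q t x :: real
  assumes "n \<ge> 1"
    and "1 + x \<noteq> 0" and "x + t \<noteq> 0" and "1 + x * t \<noteq> 0"
  shows "A_poly n q t =
    ((1 + x * t) / (1 + x)) ^ (n - 1) *
    P_poly n q ((1 + x)^2 * t / ((x + t) * (1 + x * t))) ((x + t) / (1 + x * t))"
proof -
  define lam where "lam = (1 + x) / (1 + x * t)"
  define y where "y = (1 + x)^2 * t / ((x + t) * (1 + x * t))"
  define s where "s = (x + t) / (1 + x * t)"
  obtain L where L: "\<forall>w. GG q w n = ev L (XX w) (SS w) (TT w)" using GG_inv assms(1) by blast
  have e1: "y * s = lam * 1 * (lam * t)"
  proof -
    have "y * s = ((1 + x)^2 * t * (x + t)) / ((x + t) * ((1 + x * t) * (1 + x * t)))"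
      by (simp add: y_def s_def mult_ac)
    also have "\<dots> = ((1 + x)^2 * t) / ((1 + x * t) * (1 + x * t))"
      using assms(3) by (simp add: mult.commute[of _ "x + t"])
    also have "\<dots> = lam * 1 * (lam * t)"
      by (simp add: lam_def power2_eq_square)
    finally show ?thesis .
  qed
  have e2: "s + 1 = lam * t + lam * 1"
  proof -
    have "s + 1 = ((x + t) + (1 + x * t)) / (1 + x * t)"
      using assms(4) by (simp add: s_def add_divide_distrib)
    also have "(x + t) + (1 + x * t) = (1 + x) * (t + 1)" by (simp add: algebra_simps)
    also have "(1 + x) * (t + 1) / (1 + x * t) = lam * (t + 1)" by (simp add: lam_def)
    also have "lam * (t + 1) = lam * t + lam * 1" by (simp add: algebra_simps)
    finally show ?thesis .
  qed
  have "GG q (wP y s) n = ev L (y * s) (s + 1) (1 + s)"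
    using L by (simp add: wP_def)
  also have "\<dots> = ev L (lam * 1 * (lam * t)) (lam * t + lam * 1) (lam * 1 + lam * t)"
    using e1 e2 by (simp add: add.commute)
  also have "\<dots> = GG q (\<lambda>T. lam * wA t T) n"
    using L by (simp add: wA_def)
  also have "\<dots> = lam ^ (n - 1) * A_poly n q t"
    by (simp add: GG_hom A_GG[OF assms(1)])
  finally have P: "P_poly n q y s = lam ^ (n - 1) * A_poly n q t"
    using P_GG[OF assms(1)] by simp
  have iv: "(1 + x * t) / (1 + x) = inverse lam" by (simp add: lam_def)
  have l0: "lam \<noteq> 0" using assms(2-4) by (simp add: lam_def)
  have "((1 + x * t) / (1 + x)) ^ (n - 1) * P_poly n q y s = (inverse lam * lam) ^ (n - 1) * A_poly n q t"
    unfolding iv P power_mult_distrib by (simp add: mult_ac)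
  also have "\<dots> = A_poly n q t" using l0 by simp
  finally show ?thesis unfolding y_def s_def by simp
qed

end
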